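(* Let $\epsilon'>0$, $0<\mu'\le1$, $0<\Gamma_0\le1$, and let $\tau\subset\mathbb R^m$ be a $\Gamma_0$-flake with $L(\tau)\le3\epsilon'$ and $\ell(\tau)\ge\mu'\epsilon'$. Suppose there exist $p\in\tau$, a ball $B(C,R)$ circumscribing $\tau_p$ with $R<\frac32\epsilon'$, and $\tilde\delta_0\ge0$ with $d(p,\partial B(C,R))\le\tilde\delta_0\,\ell(\tau_p)$. Then $$d\big(p,S(\tau_p)\big)\le\Big(\frac{14}{\mu'}\tilde\delta_0+\frac{216}{\mu'^3}\Gamma_0\Big)R(\tau_p).$$
   Context: A simplex is a nonempty finite subset $\sigma\subset\mathbb R^m$ (vertices need not be affinely independent); $\dim\sigma=|\sigma|-1$; faces are nonempty subsets. For $p\in\sigma$, $\sigma_p=\sigma\setminus\{p\}$. $L(\sigma)$, $\ell(\sigma)$ are the largest and smallest distances between distinct vertices. Altitude $D(p,\sigma)=d(p,\mathrm{aff}(\sigma_p))$. Thickness of a $j$-simplex: $\Upsilon(\sigma)=1$ if $j=0$, else $\min_{p}D(p,\sigma)/(jL(\sigma))$. $\sigma$ is $\Gamma_0$-good if every $j$-face $\sigma^j$ satisfies $\Upsilon(\sigma^j)\ge\Gamma_0^j$; $\Gamma_0$-bad otherwise; a $\Gamma_0$-flake is a $\Gamma_0$-bad simplex whose proper faces are all $\Gamma_0$-good. A circumscribing ball of $\sigma$ is an open ball whose boundary contains all vertices of $\sigma$. If one exists, the circumcentre $c(\sigma)$ and circumradius $R(\sigma)$ are the centre and radius of the smallest one.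 The circumsphere is $S(\sigma)=\partial B(c(\sigma),R(\sigma))\cap\mathrm{aff}(\sigma)$. *)

theory Defs
  imports "HOL-Analysis.Analysis"
begin

text \<open>A simplex is a nonempty finite set of points (vertices need not be affinely independent).\<close>
definition is_simplex :: "'a::euclidean_space set \<Rightarrow> bool" where
  "is_simplex \<sigma> \<longleftrightarrow> finite \<sigma> \<and> \<sigma> \<noteq> {}"

definition sdim :: "'a::euclidean_space set \<Rightarrow> nat" where
  "sdim \<sigma> = card \<sigma> - 1"

definition Lmax :: "'a::euclidean_space set \<Rightarrow> real" where
  "Lmax \<sigma> = Max {dist x y | x y. x \<in> \<sigma> \<and> y \<in> \<sigma> \<and> x \<noteq> y}"

definition lmin :: "'a::euclidean_space set \<Rightarrow> real" where
  "lmin \<sigma> = Min {dist x y | x y. x \<in> \<sigma> \<and> y \<in> \<sigma> \<and> x \<noteq> y}"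

definition altitude :: "'a::euclidean_space \<Rightarrow> 'a set \<Rightarrow> real" where
  "altitude p \<sigma> = infdist p (affine hull (\<sigma> - {p}))"

definition thickness :: "'a::euclidean_space set \<Rightarrow> real" where
  "thickness \<sigma> = (if sdim \<sigma> = 0 then 1
     else Min ((\<lambda>p. altitude p \<sigma>) ` \<sigma>) / (real (sdim \<sigma>) * Lmax \<sigma>))"

definition good :: "real \<Rightarrow> 'a::euclidean_space set \<Rightarrow> bool" where
  "good \<Gamma>0 \<sigma> \<longleftrightarrow> (\<forall>\<tau>. \<tau> \<subseteq> \<sigma> \<and> \<tau> \<noteq> {} \<longrightarrow> thickness \<tau> \<ge> \<Gamma>0 ^ sdim \<tau>)"

definition flake :: "real \<Rightarrow> 'a::euclidean_space set \<Rightarrow> bool" where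
  "flake \<Gamma>0 \<sigma> \<longleftrightarrow> \<not> good \<Gamma>0 \<sigma> \<and> (\<forall>\<tau>. \<tau> \<subset> \<sigma> \<and> \<tau> \<noteq> {} \<longrightarrow> good \<Gamma>0 \<tau>)"

definition circumscribing :: "'a::euclidean_space \<Rightarrow> real \<Rightarrow> 'a set \<Rightarrow> bool" where
  "circumscribing c r \<sigma> \<longleftrightarrow> r > 0 \<and> \<sigma> \<subseteq> frontier (ball c r)"

definition smallest_circumscribing :: "'a::euclidean_space \<Rightarrow> real \<Rightarrow> 'a set \<Rightarrow> bool" where
  "smallest_circumscribing c r \<sigma> \<longleftrightarrow> circumscribing c r \<sigma> \<and>
     (\<forall>c' r'. circumscribing c' r' \<sigma> \<longrightarrow> r \<le> r')"

definition circumcentre :: "'a::euclidean_space set \<Rightarrow> 'a" where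
  "circumcentre \<sigma> = fst (SOME (c, r). smallest_circumscribing c r \<sigma>)"

definition circumradius :: "'a::euclidean_space set \<Rightarrow> real" where
  "circumradius \<sigma> = snd (SOME (c, r). smallest_circumscribing c r \<sigma>)"

definition circumsphere :: "'a::euclidean_space set \<Rightarrow> 'a set" where
  "circumsphere \<sigma> = frontier (ball (circumcentre \<sigma>) (circumradius \<sigma>)) \<inter> affine hull \<sigma>"

end

theory Submission
  imports Defs
begin

lemma aff_char:
  fixes a :: "'a::euclidean_space"
  assumes "a \<in> S"
  shows "x \<in> affine hull S \<longleftrightarrow> x - a \<in> span ((\<lambda>y. y - a) ` S)"
proof -
  have e: "(\<lambda>y. -a + y) ` S = (\<lambda>y. y - a) ` S" by (intro image_cong) simp_all
  have "affine hull S = (\<lambda>y. a + y) ` span ((\<lambda>y. -a + y) ` S)"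
    by (rule affine_hull_span_gen, rule hull_inc, rule assms)
  then have h: "affine hull S = (\<lambda>y. a + y) ` span ((\<lambda>y. y - a) ` S)" unfolding e .
  show ?thesis
  proof
    assume "x \<in> affine hull S"
    then obtain v where "v \<in> span ((\<lambda>y. y - a) ` S)" "x = a + v" unfolding h by blast
    then show "x - a \<in> span ((\<lambda>y. y - a) ` S)" by simp
  next
    assume "x - a \<in> span ((\<lambda>y. y - a) ` S)"
    then show "x \<in> affine hull S" unfolding h by (intro image_eqI[where x="x - a"]) simp_all
  qed
qed

lemma aff_insert:
  fixes a :: "'a::euclidean_space"
  assumes "a \<in> S"
  shows "x \<in> affine hull (insert p S) \<longleftrightarrow>
     (\<exists>t w. w \<in> span ((\<lambda>y. y - a) ` S) \<and> x = a + w + t *\<^sub>R (p - a))"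
proof -
  have "x \<in> affine hull (insert p S) \<longleftrightarrow> x - a \<in> span ((\<lambda>y. y - a) ` insert p S)"
    using aff_char[of a "insert p S" x] assms by simp
  also have "\<dots> \<longleftrightarrow> (\<exists>k. x - a - k *\<^sub>R (p - a) \<in> span ((\<lambda>y. y - a) ` S))"
    by (simp add: span_insert)
  also have "\<dots> \<longleftrightarrow> (\<exists>t w. w \<in> span ((\<lambda>y. y - a) ` S) \<and> x = a + w + t *\<^sub>R (p - a))"
  proof
    assume "\<exists>k. x - a - k *\<^sub>R (p - a) \<in> span ((\<lambda>y. y - a) ` S)"
    then obtain k where "x - a - k *\<^sub>R (p - a) \<in> span ((\<lambda>y. y - a) ` S)" by blast
    then show "\<exists>t w. w \<in> span ((\<lambda>y. y - a) ` S) \<and> x = a + w + t *\<^sub>R (p - a)"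
      by (intro exI[of _ k] exI[of _ "x - a - k *\<^sub>R (p - a)"]) simp
  next
    assume "\<exists>t w. w \<in> span ((\<lambda>y. y - a) ` S) \<and> x = a + w + t *\<^sub>R (p - a)"
    then obtain t w where "w \<in> span ((\<lambda>y. y - a) ` S)" "x = a + w + t *\<^sub>R (p - a)" by blast
    then show "\<exists>k. x - a - k *\<^sub>R (p - a) \<in> span ((\<lambda>y. y - a) ` S)"
      by (intro exI[of _ t]) simp
  qed
  finally show ?thesis .
qed

lemma infdist_ge:
  assumes "A \<noteq> {}" "\<And>a. a \<in> A \<Longrightarrow> d \<le> dist x a"
  shows "d \<le> infdist x A"
  using assms by (simp add: infdist_notempty cINF_greatest)

lemma perp_norm:
  fixes z w :: "'a::euclidean_space"
  assumes "\<And>v. v \<in> span B \<Longrightarrow> inner z v = 0" "w \<in> span B"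
  shows "norm (z + w)^2 = norm z ^2 + norm w ^2"
  using assms norm_add_Pythagorean orthogonal_def by blast


lemma norm_diff_scale_sq:
  fixes a b :: "'a::real_inner"
  shows "norm (a - t *\<^sub>R b)^2 = norm a ^2 - 2 * t * inner a b + t^2 * norm b ^2"
  unfolding power2_norm_eq_inner by (simp add: inner_diff_left inner_diff_right inner_commute power2_eq_square algebra_simps)

lemma gram_key:
  fixes p q a0 :: "'a::euclidean_space"
  assumes a0: "a0 \<in> T"
  shows "infdist p (affine hull (insert q T)) * infdist q (affine hull T)
     \<le> infdist q (affine hull (insert p T)) * dist p a0"
proof -
  define W where "W = span ((\<lambda>y. y - a0) ` T)"
  obtain uV ub where uV: "uV \<in> W" and ub: "\<And>w. w \<in> W \<Longrightarrow> orthogonal ub w" and u: "p - a0 = uV + ub"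
    using orthogonal_subspace_decomp_exists[of "(\<lambda>y. y - a0) ` T" "p - a0"] unfolding W_def by blast
  obtain vV vb where vV: "vV \<in> W" and vb: "\<And>w. w \<in> W \<Longrightarrow> orthogonal vb w" and v: "q - a0 = vV + vb"
    using orthogonal_subspace_decomp_exists[of "(\<lambda>y. y - a0) ` T" "q - a0"] unfolding W_def by blast
  have pe: "p = a0 + uV + ub" using u by (simp add: algebra_simps)
  have qe: "q = a0 + vV + vb" using v by (simp add: algebra_simps)
  define Ip where "Ip = infdist p (affine hull (insert q T))"
  define Iq where "Iq = infdist q (affine hull (insert p T))"
  define Iv where "Iv = infdist q (affine hull T)"
  have "a0 + vV \<in> affine hull T" unfolding aff_char[OF a0] using vV unfolding W_def by simp
  then have "Iv \<le> dist q (a0 + vV)" unfolding Iv_def by (rule infdist_le)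
  moreover have "q - (a0 + vV) = vb" using qe by simp
  ultimately have Iv: "Iv \<le> norm vb" by (simp add: dist_norm)
  have Ip: "Ip \<le> norm (ub - t *\<^sub>R vb)" for t
  proof -
    have "uV - t *\<^sub>R vV \<in> W" using uV vV unfolding W_def by (simp add: span_diff span_mul)
    then have "a0 + (uV - t *\<^sub>R vV) + t *\<^sub>R (q - a0) \<in> affine hull (insert q T)"
      using aff_insert[OF a0] unfolding W_def by blast
    then have "Ip \<le> dist p (a0 + (uV - t *\<^sub>R vV) + t *\<^sub>R (q - a0))"
      unfolding Ip_def by (rule infdist_le)
    moreover have "p - (a0 + (uV - t *\<^sub>R vV) + t *\<^sub>R (q - a0)) = ub - t *\<^sub>R vb"
      using pe qe by (simp add: algebra_simps)
    ultimately show ?thesis by (simp add: dist_norm)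
  qed
  define G where "G = (norm ub)^2 * (norm vb)^2 - (inner ub vb)^2"
  have Ipn: "0 \<le> Ip" unfolding Ip_def by (rule infdist_nonneg)
  have Iqn: "0 \<le> Iq" unfolding Iq_def by (rule infdist_nonneg)
  have 1: "(Ip * norm vb)^2 \<le> G"
  proof (cases "vb = 0")
    case True then show ?thesis by (simp add: G_def)
  next
    case False
    define t where "t = inner ub vb / (norm vb)^2"
    have n: "(norm vb)^2 > 0" using False by simp
    have "Ip^2 \<le> norm (ub - t *\<^sub>R vb)^2" using Ip[of t] Ipn by (simp add: power_mono)
    also have "\<dots> = norm ub ^2 - 2 * t * inner ub vb + t^2 * norm vb ^2" by (rule norm_diff_scale_sq)
    finally have "Ip^2 * (norm vb)^2 \<le> (norm ub ^2 - 2 * t * inner ub vb + t^2 * norm vb ^2) * (norm vb)^2"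
      using n by (simp add: mult_right_mono)
    also have "\<dots> = G" unfolding G_def t_def using n by (simp add: field_simps power2_eq_square)
    finally show ?thesis by (simp add: power_mult_distrib)
  qed
  have 2: "G \<le> (Iq * norm ub)^2"
  proof (cases "G \<le> 0")
    case True
    have "0 \<le> (Iq * norm ub)^2" by simp
    then show ?thesis using True by linarith
  next
    case False
    then have G0: "G > 0" by auto
    then have ub0: "ub \<noteq> 0" by (auto simp: G_def)
    have nu: "norm ub > 0" using ub0 by simp
    have "sqrt G / norm ub \<le> dist q x" if x: "x \<in> affine hull (insert p T)" for x
    proof -
      obtain t w where w: "w \<in> W" and xe: "x = a0 + w + t *\<^sub>R (p - a0)"
        using x aff_insert[OF a0] unfolding W_def by blast
      define z where "z = vV - w - t *\<^sub>R uV"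
      have zW: "z \<in> W" unfolding z_def using w uV vV unfolding W_def by (simp add: span_diff span_mul)
      have qx: "q - x = (vb - t *\<^sub>R ub) + z"
        using pe qe xe unfolding z_def by (simp add: algebra_simps)
      have o: "inner (vb - t *\<^sub>R ub) z = 0"
        using ub[OF zW] vb[OF zW] by (simp add: orthogonal_def inner_diff_left)
      have "norm (q - x)^2 = norm (vb - t *\<^sub>R ub)^2 + norm z ^2"
        unfolding qx by (rule norm_add_Pythagorean) (simp add: orthogonal_def o)
      then have "norm (vb - t *\<^sub>R ub)^2 \<le> norm (q - x)^2" by simp
      then have A: "norm (vb - t *\<^sub>R ub)^2 * norm ub ^2 \<le> norm (q - x)^2 * norm ub ^2"
        by (simp add: mult_right_mono)
      have "G = norm (vb - t *\<^sub>R ub)^2 * norm ub ^2 - (inner ub vb - t * norm ub ^2)^2"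
        unfolding G_def norm_diff_scale_sq by (simp add: inner_commute power2_eq_square algebra_simps)
      also have "\<dots> \<le> norm (vb - t *\<^sub>R ub)^2 * norm ub ^2" by simp
      finally have "G \<le> (dist q x * norm ub)^2" using A by (simp add: dist_norm power_mult_distrib)
      then have "sqrt G \<le> sqrt ((dist q x * norm ub)^2)" by (rule real_sqrt_le_mono)
      then have "sqrt G \<le> dist q x * norm ub" by simp
      then show ?thesis using nu by (simp add: divide_le_eq)
    qed
    moreover have "affine hull (insert p T) \<noteq> {}" by simp
    ultimately have "sqrt G / norm ub \<le> Iq" unfolding Iq_def
      using infdist_ge[of "affine hull (insert p T)" "sqrt G / norm ub" q] by blast
    then have "sqrt G \<le> Iq * norm ub" using nu by (simp add: divide_le_eq)
    then have "(sqrt G)^2 \<le> (Iq * norm ub)^2" using G0 by (intro power_mono) auto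
    then show ?thesis using G0 by simp
  qed
  have 3: "norm ub \<le> dist p a0"
  proof -
    have "norm (ub + uV)^2 = norm ub ^2 + norm uV ^2"
      by (rule norm_add_Pythagorean) (rule ub[OF uV])
    moreover have "p - a0 = ub + uV" using u by (simp add: add.commute)
    ultimately have "norm ub ^2 \<le> norm (p - a0)^2" by simp
    then have "norm ub \<le> norm (p - a0)" by (rule power2_le_imp_le) simp
    then show ?thesis by (simp add: dist_norm)
  qed
  have 4: "Ip * norm vb \<le> Iq * norm ub"
    by (rule power2_le_imp_le[OF order_trans[OF 1 2]]) (simp add: Iqn)
  have "Ip * Iv \<le> Ip * norm vb" using Iv Ipn by (rule mult_left_mono)
  also have "\<dots> \<le> Iq * norm ub" by (rule 4)
  also have "\<dots> \<le> Iq * dist p a0" using 3 Iqn by (rule mult_left_mono)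
  finally show ?thesis unfolding Ip_def Iq_def Iv_def .
qed


lemma decomp:
  fixes x :: "'a::euclidean_space"
  obtains y z where "y \<in> span S" "\<And>w. w \<in> span S \<Longrightarrow> inner z w = 0" "x = y + z"
proof -
  obtain y z where "y \<in> span S" "\<And>w. w \<in> span S \<Longrightarrow> orthogonal z w" "x = y + z"
    by (rule orthogonal_subspace_decomp_exists[of S x]) (rule that)
  then show ?thesis using that unfolding orthogonal_def by blast
qed

lemma aff_diff_span:
  fixes y0 :: "'a::euclidean_space"
  assumes "y0 \<in> T" "x \<in> affine hull T" "x' \<in> affine hull T"
  shows "x - x' \<in> span ((\<lambda>y. y - y0) ` T)"
proof -
  have "x - y0 \<in> span ((\<lambda>y. y - y0) ` T)" using assms(2) unfolding aff_char[OF assms(1)] .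
  moreover have "x' - y0 \<in> span ((\<lambda>y. y - y0) ` T)" using assms(3) unfolding aff_char[OF assms(1)] .
  ultimately have "(x - y0) - (x' - y0) \<in> span ((\<lambda>y. y - y0) ` T)" by (rule span_diff)
  then show ?thesis by simp
qed

lemma proj_aff:
  fixes y0 X :: "'a::euclidean_space"
  assumes "y0 \<in> T"
  obtains c z where "c \<in> affine hull T" "\<And>v. v \<in> span ((\<lambda>y. y - y0) ` T) \<Longrightarrow> inner z v = 0" "X = c + z"
proof -
  obtain w z where w: "w \<in> span ((\<lambda>y. y - y0) ` T)" and z: "\<And>v. v \<in> span ((\<lambda>y. y - y0) ` T) \<Longrightarrow> inner z v = 0"
    and e: "X - y0 = w + z"
    by (rule decomp[where x="X - y0"]) (rule that)
  have A: "y0 + w \<in> affine hull T" unfolding aff_char[OF assms] using w by simp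
  have B: "X = (y0 + w) + z" using e by (simp add: algebra_simps)
  show thesis by (rule that[OF A z B])
qed

lemma pyth_aff:
  fixes y0 c z x :: "'a::euclidean_space"
  assumes "y0 \<in> T" "c \<in> affine hull T" "\<And>v. v \<in> span ((\<lambda>y. y - y0) ` T) \<Longrightarrow> inner z v = 0"
    "x \<in> affine hull T"
  shows "dist x (c + z)^2 = dist x c ^2 + norm z ^2"
proof -
  have s: "x - c \<in> span ((\<lambda>y. y - y0) ` T)" using assms(1,4,2) by (rule aff_diff_span)
  have i: "inner z (x - c) = 0" by (rule assms(3)[OF s])
  have P: "norm ((x - c) + (- z))^2 = norm (x - c)^2 + norm (-z)^2"
    by (rule norm_add_Pythagorean) (simp add: orthogonal_def i inner_commute)
  have d1: "dist x (c + z) = norm ((x - c) + (- z))" by (simp add: dist_norm algebra_simps)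
  have d2: "dist x c = norm (x - c)" by (simp add: dist_norm)
  show ?thesis unfolding d1 d2 by (simp only: P norm_minus_cancel)
qed

lemma equi_orth:
  fixes y0 c C v :: "'a::euclidean_space"
  assumes "y0 \<in> T" "\<And>y. y \<in> T \<Longrightarrow> dist y c = r" "\<And>y. y \<in> T \<Longrightarrow> dist y C = R"
    "v \<in> span ((\<lambda>y. y - y0) ` T)"
  shows "inner (c - C) v = 0"
proof -
  have g: "orthogonal (c - C) u" if uu: "u \<in> (\<lambda>y. y - y0) ` T" for u
  proof -
    obtain y where y': "u = y - y0" "y \<in> T" using uu by (rule imageE)
    then have y: "y \<in> T" "u = y - y0" by simp_all
    have "norm (y - c) = norm (y0 - c)" "norm (y - C) = norm (y0 - C)"
      using assms(2,3)[OF y(1)] assms(2,3)[OF assms(1)] by (simp_all add: dist_norm)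
    then have "norm (y - c)^2 = norm (y0 - c)^2" "norm (y - C)^2 = norm (y0 - C)^2" by simp_all
    then have e1: "inner (y - c) (y - c) = inner (y0 - c) (y0 - c)"
      and e2: "inner (y - C) (y - C) = inner (y0 - C) (y0 - C)" unfolding power2_norm_eq_inner .
    have e1': "inner y y - 2 * inner y c = inner y0 y0 - 2 * inner y0 c"
      using e1 by (simp add: inner_diff_left inner_diff_right inner_commute)
    have e2': "inner y y - 2 * inner y C = inner y0 y0 - 2 * inner y0 C"
      using e2 by (simp add: inner_diff_left inner_diff_right inner_commute)
    have "inner (c - C) (y - y0) = inner y c - inner y C - inner y0 c + inner y0 C"
      by (simp add: inner_diff_left inner_diff_right inner_commute)
    also have "\<dots> = 0" using e1' e2' by linarith
    finally show ?thesis unfolding orthogonal_def y(2) .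
  qed
  show ?thesis using orthogonal_to_span[OF assms(4) g] by (simp add: orthogonal_def)
qed

lemma circ_pos: "circumscribing c r T \<Longrightarrow> r > 0"
  unfolding circumscribing_def by (rule conjunct1)

lemma circ_dist:
  assumes "circumscribing c r T" "y \<in> T"
  shows "dist y c = r"
proof -
  have r: "r > 0" using assms(1) by (rule circ_pos)
  have sub: "T \<subseteq> frontier (ball c r)" using assms(1) unfolding circumscribing_def by (rule conjunct2)
  have "y \<in> frontier (ball c r)" using sub assms(2) by (rule subsetD)
  then have "dist c y = r" using r by simp
  then show ?thesis by (simp add: dist_commute)
qed

lemma circ_intro:
  assumes r: "r > 0" and d: "\<And>y. y \<in> T \<Longrightarrow> dist y c = r"
  shows "circumscribing c r T"
  unfolding circumscribing_def
proof (intro conjI subsetI)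
  show "r > 0" by (rule r)
  fix y assume yT: "y \<in> T"
  have "dist y c = r" by (rule d[OF yT])
  then have "dist c y = r" by (simp add: dist_commute)
  then show "y \<in> frontier (ball c r)" using r by simp
qed

lemma centre_unique:
  fixes c c' :: "'a::euclidean_space"
  assumes "y0 \<in> T" "c \<in> affine hull T" "c' \<in> affine hull T"
    "\<And>y. y \<in> T \<Longrightarrow> dist y c = r" "\<And>y. y \<in> T \<Longrightarrow> dist y c' = r'"
  shows "c = c'"
proof -
  have s: "c - c' \<in> span ((\<lambda>y. y - y0) ` T)" using assms(1,2,3) by (rule aff_diff_span)
  have "inner (c - c') (c - c') = 0" by (rule equi_orth[OF assms(1,4,5) s])
  then show ?thesis by simp
qed

lemma proj_equi:
  fixes y0 c' c1 z1 :: "'a::euclidean_space"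
  assumes y0: "y0 \<in> T" and cc: "circumscribing c' r' T" and c1: "c1 \<in> affine hull T"
    and z1: "\<And>v. v \<in> span ((\<lambda>y. y - y0) ` T) \<Longrightarrow> inner z1 v = 0" and e: "c' = c1 + z1"
  shows "\<And>y. y \<in> T \<Longrightarrow> dist y c1 = dist y0 c1" "r'^2 = dist y0 c1 ^2 + norm z1 ^2"
proof -
  have sq: "r'^2 = dist y c1 ^2 + norm z1 ^2" if "y \<in> T" for y
  proof -
    have "dist y c' = r'" using cc that by (rule circ_dist)
    moreover have "y \<in> affine hull T" using that by (rule hull_inc)
    ultimately show ?thesis using pyth_aff[OF y0 c1 z1, of y] e by simp
  qed
  show "r'^2 = dist y0 c1 ^2 + norm z1 ^2" by (rule sq[OF y0])
  fix y assume "y \<in> T"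
  from sq[OF this] sq[OF y0] have "dist y c1 ^2 = dist y0 c1 ^2" by simp
  then show "dist y c1 = dist y0 c1" by simp
qed

lemma smallest_exists:
  fixes C :: "'a::euclidean_space"
  assumes y0: "y0 \<in> T" and y1: "y1 \<in> T" and ne: "y0 \<noteq> y1" and cC: "circumscribing C R T"
  shows "\<exists>c r. smallest_circumscribing c r T"
proof -
  obtain c z where c: "c \<in> affine hull T" and z: "\<And>v. v \<in> span ((\<lambda>y. y - y0) ` T) \<Longrightarrow> inner z v = 0"
    and e: "C = c + z" by (rule proj_aff[OF y0, where X=C]) (rule that)
  define r where "r = dist y0 c"
  have dy: "dist y c = r" if "y \<in> T" for y
    unfolding r_def by (rule proj_equi(1)[OF y0 cC c z e that])
  have rpos: "r > 0"
  proof (rule ccontr)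
    assume "\<not> r > 0"
    then have "r = 0" using r_def by simp
    then have "y0 = c" "y1 = c" using dy[OF y0] dy[OF y1] by simp_all
    then show False using ne by simp
  qed
  have circ: "circumscribing c r T" using rpos dy by (rule circ_intro)
  have "r \<le> r'" if cc: "circumscribing c' r' T" for c' r'
  proof -
    obtain c1 z1 where c1: "c1 \<in> affine hull T" and z1: "\<And>v. v \<in> span ((\<lambda>y. y - y0) ` T) \<Longrightarrow> inner z1 v = 0"
      and e1: "c' = c1 + z1" by (rule proj_aff[OF y0, where X=c']) (rule that)
    have "c = c1"
      using y0 c c1 dy proj_equi(1)[OF y0 cc c1 z1 e1] by (rule centre_unique)
    then have "r'^2 = r^2 + norm z1 ^2" using proj_equi(2)[OF y0 cc c1 z1 e1] r_def by simp
    then have rr: "r^2 \<le> r'^2" by simp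
    have "r' > 0" using cc by (rule circ_pos)
    then have "0 \<le> r'" by simp
    with rr show ?thesis by (rule power2_le_imp_le)
  qed
  then have "smallest_circumscribing c r T" unfolding smallest_circumscribing_def using circ by blast
  then show ?thesis by blast
qed

lemma smallest_in_aff:
  fixes c0 :: "'a::euclidean_space"
  assumes y0: "y0 \<in> T" and y1: "y1 \<in> T" and ne: "y0 \<noteq> y1" and sm: "smallest_circumscribing c0 r0 T"
  shows "c0 \<in> affine hull T"
proof (rule ccontr)
  assume nc: "c0 \<notin> affine hull T"
  have cc: "circumscribing c0 r0 T" using sm unfolding smallest_circumscribing_def by simp
  obtain c1 z1 where c1: "c1 \<in> affine hull T" and z1: "\<And>v. v \<in> span ((\<lambda>y. y - y0) ` T) \<Longrightarrow> inner z1 v = 0"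
    and e1: "c0 = c1 + z1" by (rule proj_aff[OF y0, where X=c0]) (rule that)
  have z0: "z1 \<noteq> 0"
  proof
    assume "z1 = 0"
    then have "c0 = c1" using e1 by simp
    then show False using nc c1 by simp
  qed
  define r1 where "r1 = dist y0 c1"
  have dy: "dist y c1 = r1" if "y \<in> T" for y
    unfolding r1_def by (rule proj_equi(1)[OF y0 cc c1 z1 e1 that])
  have sq: "r0^2 = r1^2 + norm z1^2" using proj_equi(2)[OF y0 cc c1 z1 e1] r1_def by simp
  have rpos: "r1 > 0"
  proof (rule ccontr)
    assume "\<not> r1 > 0"
    then have "r1 = 0" using r1_def by simp
    then have "y0 = c1" "y1 = c1" using dy[OF y0] dy[OF y1] by simp_all
    then show False using ne by simp
  qed
  have "circumscribing c1 r1 T" using rpos dy by (rule circ_intro)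
  then have "r0 \<le> r1" using sm unfolding smallest_circumscribing_def by blast
  moreover have "r1^2 < r0^2" using sq z0 by simp
  moreover have "r1 \<ge> 0" using rpos by simp
  moreover have "r0 \<ge> 0" using cc circ_pos by fastforce
  ultimately have "r0^2 \<le> r1^2" by (intro power_mono) simp_all
  then show False using \<open>r1^2 < r0^2\<close> by simp
qed

lemma circ_facts:
  fixes C :: "'a::euclidean_space"
  assumes y0: "y0 \<in> T" and y1: "y1 \<in> T" and ne: "y0 \<noteq> y1" and cC: "circumscribing C R T"
  shows "circumscribing (circumcentre T) (circumradius T) T" "circumcentre T \<in> affine hull T"
    "circumradius T \<le> R"
proof -
  have ex: "\<exists>x. (case x of (c, r) \<Rightarrow> smallest_circumscribing c r T)"
    using smallest_exists[OF y0 y1 ne cC] by auto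
  define x where "x = (SOME x. case x of (c, r) \<Rightarrow> smallest_circumscribing c r T)"
  have "case x of (c, r) \<Rightarrow> smallest_circumscribing c r T" unfolding x_def by (rule someI_ex[OF ex])
  then have sm: "smallest_circumscribing (fst x) (snd x) T" by (simp add: case_prod_beta)
  have eqs: "circumcentre T = fst x" "circumradius T = snd x"
    unfolding circumcentre_def circumradius_def x_def by simp_all
  show "circumscribing (circumcentre T) (circumradius T) T"
    using sm unfolding eqs smallest_circumscribing_def by simp
  show "circumcentre T \<in> affine hull T" unfolding eqs by (rule smallest_in_aff[OF y0 y1 ne sm])
  show "circumradius T \<le> R" using sm cC unfolding eqs smallest_circumscribing_def by blast
qed



lemma sqrt_bound:
  fixes h X K D m :: real
  assumes h: "0 \<le> h" and D: "0 \<le> D" and K0: "0 \<le> K" and Km: "K \<le> m" and K1: "1 + K^2 \<le> m^2"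
    and X: "\<bar>X\<bar> \<le> K * (D + h)"
  shows "sqrt (h^2 + X^2) \<le> K * D + m * h"
proof -
  have m0: "0 \<le> m" using K0 Km by linarith
  have XX: "X^2 \<le> (K * (D + h))^2"
    using X by (metis abs_le_square_iff abs_of_nonneg D h K0 add_nonneg_nonneg mult_nonneg_nonneg)
  have f1: "K * K * (D * h) \<le> m * K * (D * h)"
    using Km K0 D h by (intro mult_right_mono) (simp_all add: mult_right_mono)
  have f2: "(1 + K^2) * h^2 \<le> m^2 * h^2"
    using K1 by (intro mult_right_mono) simp_all
  have eq: "(K * D + m * h)^2 - (h^2 + (K * (D + h))^2)
      = 2 * (m * K * (D * h) - K * K * (D * h)) + (m^2 * h^2 - (1 + K^2) * h^2)"
    by (simp add: power2_eq_square algebra_simps)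
  have g1: "0 \<le> 2 * (m * K * (D * h) - K * K * (D * h))" using f1 by simp
  have g2: "0 \<le> m^2 * h^2 - (1 + K^2) * h^2" using f2 by simp
  have "0 \<le> (K * D + m * h)^2 - (h^2 + (K * (D + h))^2)" unfolding eq
    using g1 g2 by (rule add_nonneg_nonneg)
  then have "h^2 + (K * (D + h))^2 \<le> (K * D + m * h)^2" by simp
  then have "h^2 + X^2 \<le> (K * D + m * h)^2" using \<open>X^2 \<le> (K * (D + h))^2\<close> by linarith
  then have "sqrt (h^2 + X^2) \<le> sqrt ((K * D + m * h)^2)" by (rule real_sqrt_le_mono)
  also have "\<dots> = K * D + m * h" using K0 D m0 h by simp
  finally show ?thesis .
qed

lemma K_facts:
  fixes \<mu> :: real
  assumes "0 < \<mu>" "\<mu> \<le> 1"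
  shows "0 \<le> 6/\<mu> - \<mu>/6" "6/\<mu> - \<mu>/6 \<le> 6/\<mu>" "1 + (6/\<mu> - \<mu>/6)^2 \<le> (6/\<mu>)^2"
proof -
  have a: "6/\<mu> \<ge> 6" using assms by (simp add: field_simps)
  have b: "\<mu>/6 \<le> 1/6" using assms by simp
  show "0 \<le> 6/\<mu> - \<mu>/6" using a b by linarith
  show "6/\<mu> - \<mu>/6 \<le> 6/\<mu>" using assms by simp
  have e: "(6/\<mu> - \<mu>/6)^2 = (6/\<mu>)^2 - 2 + (\<mu>/6)^2"
    using assms by (simp add: power2_eq_square field_simps)
  have "(\<mu>/6)^2 \<le> 1" using assms b by (simp add: power_le_one)
  then show "1 + (6/\<mu> - \<mu>/6)^2 \<le> (6/\<mu>)^2" unfolding e by linarith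
qed

lemma sR_bound:
  fixes s R r0 \<mu> :: real
  assumes s0: "0 \<le> s" and Rs: "R^2 = r0^2 + s^2" and r0: "0 < r0" and r0R: "r0 \<le> R"
    and mu: "0 < \<mu>" "\<mu> \<le> 1" and Rb: "R \<le> 3 / \<mu> * r0"
  shows "s + R \<le> (6/\<mu> - \<mu>/6) * r0"
proof -
  have R0: "R > 0" using r0 r0R by linarith
  define t where "t = R - r0^2 / (2*R)"
  have t0: "0 \<le> t"
  proof -
    have "r0^2 \<le> R^2" using r0R r0 by (intro power_mono) simp_all
    then have "r0^2 / (2*R) \<le> R^2 / (2*R)" using R0 by (intro divide_right_mono) simp_all
    also have "\<dots> = R / 2" using R0 by (simp add: power2_eq_square field_simps)
    finally show ?thesis unfolding t_def using R0 by linarith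
  qed
  have "t^2 = R^2 - r0^2 + (r0^2/(2*R))^2" unfolding t_def using R0
    by (simp add: power2_eq_square field_simps)
  then have "s^2 \<le> t^2" using Rs by simp
  then have st: "s \<le> t" using t0 by (rule power2_le_imp_le)
  have q: "\<mu> * r0 / 6 \<le> r0^2 / (2*R)"
  proof -
    have "2 * R * \<mu> \<le> 6 * r0" using Rb mu by (simp add: field_simps)
    then have "\<mu> * r0 * (2 * R) \<le> 6 * r0 * r0" using r0 by (simp add: algebra_simps mult_left_mono)
    then show ?thesis using R0 by (simp add: field_simps power2_eq_square)
  qed
  have "2 * R \<le> 6 / \<mu> * r0" using Rb by simp
  then have "s + R \<le> 6 / \<mu> * r0 - \<mu> * r0 / 6" using st q unfolding t_def by linarith
  then show ?thesis by (simp add: algebra_simps)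
qed

lemma key_ratio:
  fixes a b r0 s R :: real
  assumes a0: "0 \<le> a" and r0: "0 < r0" and r0R: "r0 \<le> R" and s0: "0 \<le> s" and b0: "0 \<le> b"
    and ab: "b^2 = a^2 + s^2" and Rs: "R^2 = r0^2 + s^2" and bas: "b \<le> a + s"
  shows "\<bar>a - r0\<bar> * r0 \<le> \<bar>b - R\<bar> * (s + R)"
proof -
  have e: "(a - r0) * (a + r0) = (b - R) * (b + R)"
    using ab Rs by (simp add: algebra_simps power2_eq_square)
  have x1: "\<bar>a - r0\<bar> * (a + r0) = \<bar>(a - r0) * (a + r0)\<bar>" using a0 r0 by (simp add: abs_mult)
  have x2: "\<bar>b - R\<bar> * (b + R) = \<bar>(b - R) * (b + R)\<bar>" using b0 r0 r0R by (simp add: abs_mult)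
  have e2: "\<bar>a - r0\<bar> * (a + r0) = \<bar>b - R\<bar> * (b + R)" unfolding x1 x2 e ..
  have "\<bar>b - R\<bar> * (b + R) \<le> \<bar>b - R\<bar> * (a + s + R)" using bas by (intro mult_left_mono) simp_all
  then have E: "\<bar>a - r0\<bar> * (a + r0) \<le> \<bar>b - R\<bar> * (a + s + R)" using e2 by simp
  show ?thesis
  proof (cases "\<bar>a - r0\<bar> \<le> \<bar>b - R\<bar>")
    case True
    have "\<bar>a - r0\<bar> * r0 \<le> \<bar>b - R\<bar> * r0" using True r0 by (intro mult_right_mono) simp_all
    also have "\<dots> \<le> \<bar>b - R\<bar> * (s + R)" using r0R s0 by (intro mult_left_mono) simp_all
    finally show ?thesis .
  next
    case False
    have "\<bar>b - R\<bar> * a \<le> \<bar>a - r0\<bar> * a" using False a0 by (intro mult_right_mono) simp_all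
    then show ?thesis using E by (simp add: algebra_simps)
  qed
qed


lemma sphere_bound:
  fixes p C y0 y1 :: "'a::euclidean_space"
  assumes y0: "y0 \<in> T" and y1: "y1 \<in> T" and ne: "y0 \<noteq> y1" and cC: "circumscribing C R T"
    and mu: "0 < \<mu>" "\<mu> \<le> 1"
    and Rb: "R \<le> 3 / \<mu> * circumradius T"
    and H: "infdist p (affine hull T) \<le> H"
    and D: "infdist p (frontier (ball C R)) \<le> D"
  shows "infdist p (circumsphere T) \<le> 6/\<mu> * D + 6/\<mu> * H"
proof -
  define c0 where "c0 = circumcentre T"
  define r0 where "r0 = circumradius T"
  have cc0: "circumscribing c0 r0 T" unfolding c0_def r0_def by (rule circ_facts(1)[OF y0 y1 ne cC])
  have c0F: "c0 \<in> affine hull T" unfolding c0_def by (rule circ_facts(2)[OF y0 y1 ne cC])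
  have r0R: "r0 \<le> R" unfolding r0_def by (rule circ_facts(3)[OF y0 y1 ne cC])
  have r0: "r0 > 0" using cc0 by (rule circ_pos)
  have R0: "R > 0" using cC by (rule circ_pos)
  have dT: "\<And>y. y \<in> T \<Longrightarrow> dist y c0 = r0" using cc0 by (rule circ_dist)
  have dC: "\<And>y. y \<in> T \<Longrightarrow> dist y C = R" using cC by (rule circ_dist)
  have Corth: "\<And>v. v \<in> span ((\<lambda>y. y - y0) ` T) \<Longrightarrow> inner (C - c0) v = 0"
    using y0 dC dT by (rule equi_orth)
  define s where "s = norm (C - c0)"
  have pyC: "dist x C ^2 = dist x c0 ^2 + s^2" if "x \<in> affine hull T" for x
  proof -
    have "dist x (c0 + (C - c0))^2 = dist x c0 ^2 + norm (C - c0)^2" using y0 c0F Corth that by (rule pyth_aff)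
    then show ?thesis unfolding s_def by simp
  qed
  have y0F: "y0 \<in> affine hull T" using y0 by (rule hull_inc)
  have Rs: "R^2 = r0^2 + s^2" using pyC[OF y0F] dT[OF y0] dC[OF y0] by simp
  have s0: "0 \<le> s" unfolding s_def by simp
  obtain p' z where p'F: "p' \<in> affine hull T" and zo: "\<And>v. v \<in> span ((\<lambda>y. y - y0) ` T) \<Longrightarrow> inner z v = 0"
    and pe: "p = p' + z" by (rule proj_aff[OF y0, where X=p]) (rule that)
  define h where "h = norm z"
  have h0: "0 \<le> h" unfolding h_def by simp
  have hI: "h \<le> infdist p (affine hull T)"
  proof (rule infdist_ge)
    show "affine hull T \<noteq> {}"
    proof
      assume "affine hull T = {}"
      then show False using y0F by simp
    qed
    fix x assume xF: "x \<in> affine hull T"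
    have "dist x (p' + z)^2 = dist x p'^2 + norm z^2" using y0 p'F zo xF by (rule pyth_aff)
    then have "norm z ^2 \<le> dist x p ^2" unfolding pe by simp
    then have "h^2 \<le> dist p x ^2" unfolding h_def by (simp add: dist_commute)
    then show "h \<le> dist p x" by (rule power2_le_imp_le) simp
  qed
  have hH: "h \<le> H" using hI H by linarith
  define a where "a = dist p' c0"
  define b where "b = dist p' C"
  have ab: "b^2 = a^2 + s^2" unfolding a_def b_def by (rule pyC[OF p'F])
  have cs: "circumsphere T = sphere c0 r0 \<inter> affine hull T"
    unfolding circumsphere_def c0_def[symmetric] r0_def[symmetric] using r0 by simp
  obtain y where yS: "y \<in> circumsphere T" and ny: "norm (p' - y) = \<bar>a - r0\<bar>"
  proof (cases "p' = c0")
    case True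
    have m1: "y0 \<in> circumsphere T" unfolding cs using dT[OF y0] y0F by (simp add: dist_commute)
    have "norm (p' - y0) = dist y0 c0" unfolding True by (simp add: dist_norm norm_minus_commute)
    then have m2: "norm (p' - y0) = \<bar>a - r0\<bar>" unfolding a_def True using dT[OF y0] r0 by simp
    show ?thesis using m1 m2 by (rule that)
  next
    case False
    have a0: "a > 0" unfolding a_def using False by simp
    define y where "y = c0 + (r0 / a) *\<^sub>R (p' - c0)"
    have "affine (affine hull T)" by (rule affine_affine_hull)
    then have yF: "y \<in> affine hull T" unfolding y_def using c0F p'F c0F by (rule mem_affine_3_minus)
    have nd: "norm (p' - c0) = a" unfolding a_def by (simp add: dist_norm)
    have "c0 - y = - ((r0 / a) *\<^sub>R (p' - c0))" unfolding y_def by simp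
    then have "dist c0 y = (r0 / a) * a" unfolding dist_norm using nd a0 r0 by simp
    also have "\<dots> = r0" using a0 by simp
    finally have M1: "y \<in> circumsphere T" unfolding cs using yF by simp
    have "p' - y = (1 - r0 / a) *\<^sub>R (p' - c0)" unfolding y_def by (simp add: algebra_simps)
    then have "norm (p' - y) = \<bar>1 - r0/a\<bar> * a" using nd by simp
    also have "\<dots> = \<bar>(1 - r0/a) * a\<bar>" using a0 by (simp add: abs_mult)
    also have "(1 - r0/a) * a = a - r0" using a0 by (simp add: field_simps)
    finally have M2: "norm (p' - y) = \<bar>a - r0\<bar>" .
    show ?thesis using M1 M2 by (rule that)
  qed
  have yF: "y \<in> affine hull T" using yS unfolding cs by simp
  have "p' - y \<in> span ((\<lambda>y. y - y0) ` T)" using y0 p'F yF by (rule aff_diff_span)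
  then have iz: "inner z (p' - y) = 0" by (rule zo)
  have dpy: "dist p y^2 = h^2 + (a - r0)^2"
  proof -
    have e: "p - y = z + (p' - y)" unfolding pe by simp
    have "dist p y ^2 = norm (z + (p' - y))^2" unfolding dist_norm e ..
    also have "\<dots> = norm z^2 + norm (p' - y)^2"
      by (rule norm_add_Pythagorean) (simp add: orthogonal_def iz)
    also have "\<dots> = h^2 + (a - r0)^2" unfolding h_def ny by simp
    finally show ?thesis .
  qed
  have "sqrt (h^2 + (a - r0)^2) = dist p y" unfolding dpy[symmetric] by simp
  then have Sb: "infdist p (circumsphere T) \<le> sqrt (h^2 + (a - r0)^2)"
    using infdist_le[OF yS, of p] by simp
  have bI: "\<bar>b - R\<bar> \<le> infdist p' (frontier (ball C R))"
  proof (rule infdist_ge)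
    have m: "y0 \<in> frontier (ball C R)" using R0 dC[OF y0] by (simp add: dist_commute)
    show "frontier (ball C R) \<noteq> {}"
    proof
      assume "frontier (ball C R) = {}"
      then show False using m by simp
    qed
    fix y' assume y': "y' \<in> frontier (ball C R)"
    then have dy': "dist C y' = R" using R0 by simp
    have t1: "dist p' C \<le> dist p' y' + dist y' C" by (rule dist_triangle)
    have t2: "dist C y' \<le> dist C p' + dist p' y'" by (rule dist_triangle)
    have c1: "dist y' C = dist C y'" by (rule dist_commute)
    have c2: "dist C p' = dist p' C" by (rule dist_commute)
    show "\<bar>b - R\<bar> \<le> dist p' y'" unfolding abs_le_iff b_def
      using t1 t2 c1 c2 dy' by (intro conjI) linarith+
  qed
  have "infdist p' (frontier (ball C R)) \<le> infdist p (frontier (ball C R)) + dist p' p"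
    by (rule infdist_triangle)
  moreover have "dist p' p = h" unfolding h_def pe by (simp add: dist_norm)
  ultimately have bDh: "\<bar>b - R\<bar> \<le> D + h" using bI D by linarith
  have bas: "b \<le> a + s"
  proof -
    have "dist p' C \<le> dist p' c0 + dist c0 C" by (rule dist_triangle)
    moreover have "dist c0 C = s" unfolding s_def by (simp add: dist_norm norm_minus_commute)
    ultimately show ?thesis unfolding a_def b_def by simp
  qed
  have a0: "0 \<le> a" and b0: "0 \<le> b" unfolding a_def b_def by simp_all
  have kr: "\<bar>a - r0\<bar> * r0 \<le> \<bar>b - R\<bar> * (s + R)"
    by (rule key_ratio[OF a0 r0 r0R s0 b0 ab Rs bas])
  have Rb': "R \<le> 3 / \<mu> * r0" using Rb unfolding r0_def .
  have sRK: "s + R \<le> (6/\<mu> - \<mu>/6) * r0" by (rule sR_bound[OF s0 Rs r0 r0R mu Rb'])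
  define K where "K = 6/\<mu> - \<mu>/6"
  have K0: "0 \<le> K" and Km: "K \<le> 6/\<mu>" and K1: "1 + K^2 \<le> (6/\<mu>)^2"
    unfolding K_def using K_facts[OF mu] by simp_all
  have D0: "0 \<le> D" using D infdist_nonneg[of p "frontier (ball C R)"] by linarith
  have "\<bar>b - R\<bar> * (s + R) \<le> (D + h) * (s + R)" using bDh s0 R0 by (intro mult_right_mono) simp_all
  also have "\<dots> \<le> (D + h) * (K * r0)" using sRK D0 h0 unfolding K_def by (intro mult_left_mono) simp_all
  finally have "\<bar>a - r0\<bar> * r0 \<le> (K * (D + h)) * r0" using kr by (simp add: algebra_simps)
  then have X: "\<bar>a - r0\<bar> \<le> K * (D + h)" using r0 by simp
  have "sqrt (h^2 + (a - r0)^2) \<le> K * D + 6/\<mu> * h" by (rule sqrt_bound[OF h0 D0 K0 Km K1 X])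
  also have "K * D \<le> 6/\<mu> * D" using Km D0 by (rule mult_right_mono)
  also have "6/\<mu> * h \<le> 6/\<mu> * H" using hH mu by (intro mult_left_mono) simp_all
  finally show ?thesis using Sb by simp
qed



lemma dset_fin:
  fixes \<tau> :: "'a::euclidean_space set"
  assumes "finite \<tau>"
  shows "finite {dist x y | x y. x \<in> \<tau> \<and> y \<in> \<tau> \<and> x \<noteq> y}"
proof (rule finite_subset[of _ "(\<lambda>(x,y). dist x y) ` (\<tau> \<times> \<tau>)"])
  show "{dist x y | x y. x \<in> \<tau> \<and> y \<in> \<tau> \<and> x \<noteq> y} \<subseteq> (\<lambda>(x,y). dist x y) ` (\<tau> \<times> \<tau>)"
    by force
  show "finite ((\<lambda>(x,y). dist x y) ` (\<tau> \<times> \<tau>))" using assms by simp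
qed

lemma Lmax_ge:
  fixes \<tau> :: "'a::euclidean_space set"
  assumes "finite \<tau>" "x \<in> \<tau>" "y \<in> \<tau>" "x \<noteq> y"
  shows "dist x y \<le> Lmax \<tau>"
  unfolding Lmax_def by (rule Max_ge[OF dset_fin[OF assms(1)]]) (use assms in blast)

lemma lmin_le:
  fixes \<tau> :: "'a::euclidean_space set"
  assumes "finite \<tau>" "x \<in> \<tau>" "y \<in> \<tau>" "x \<noteq> y"
  shows "lmin \<tau> \<le> dist x y"
  unfolding lmin_def by (rule Min_le[OF dset_fin[OF assms(1)]]) (use assms in blast)

lemma lmin_in:
  fixes \<tau> :: "'a::euclidean_space set"
  assumes "finite \<tau>" "x \<in> \<tau>" "y \<in> \<tau>" "x \<noteq> y"
  obtains u v where "u \<in> \<tau>" "v \<in> \<tau>" "u \<noteq> v" "lmin \<tau> = dist u v"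
proof -
  have ne: "{dist x y | x y. x \<in> \<tau> \<and> y \<in> \<tau> \<and> x \<noteq> y} \<noteq> {}" using assms by blast
  have "lmin \<tau> \<in> {dist x y | x y. x \<in> \<tau> \<and> y \<in> \<tau> \<and> x \<noteq> y}"
    unfolding lmin_def by (rule Min_in[OF dset_fin[OF assms(1)] ne])
  then show ?thesis using that by blast
qed

lemma Lmax_in:
  fixes \<tau> :: "'a::euclidean_space set"
  assumes "finite \<tau>" "x \<in> \<tau>" "y \<in> \<tau>" "x \<noteq> y"
  obtains u v where "u \<in> \<tau>" "v \<in> \<tau>" "u \<noteq> v" "Lmax \<tau> = dist u v"
proof -
  have ne: "{dist x y | x y. x \<in> \<tau> \<and> y \<in> \<tau> \<and> x \<noteq> y} \<noteq> {}" using assms by blast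
  have "Lmax \<tau> \<in> {dist x y | x y. x \<in> \<tau> \<and> y \<in> \<tau> \<and> x \<noteq> y}"
    unfolding Lmax_def by (rule Max_in[OF dset_fin[OF assms(1)] ne])
  then show ?thesis using that by blast
qed

lemma lmin_mono:
  fixes \<tau> :: "'a::euclidean_space set"
  assumes "finite \<tau>" "\<sigma> \<subseteq> \<tau>" "x \<in> \<sigma>" "y \<in> \<sigma>" "x \<noteq> y"
  shows "lmin \<tau> \<le> lmin \<sigma>"
proof -
  have f: "finite \<sigma>" using assms(1,2) by (rule finite_subset[rotated])
  obtain u v where uv: "u \<in> \<sigma>" "v \<in> \<sigma>" "u \<noteq> v" "lmin \<sigma> = dist u v"
    using lmin_in[OF f assms(3,4,5)] by blast
  have "lmin \<tau> \<le> dist u v" using assms(1) uv(1-3) assms(2) by (intro lmin_le) auto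
  then show ?thesis using uv(4) by simp
qed

lemma lmin_Lmax:
  fixes \<tau> :: "'a::euclidean_space set"
  assumes "finite \<tau>" "x \<in> \<tau>" "y \<in> \<tau>" "x \<noteq> y"
  shows "lmin \<tau> \<le> Lmax \<tau>"
proof -
  obtain u v where uv: "u \<in> \<tau>" "v \<in> \<tau>" "u \<noteq> v" "lmin \<tau> = dist u v"
    using lmin_in[OF assms] by blast
  show ?thesis using Lmax_ge[OF assms(1) uv(1-3)] uv(4) by simp
qed

lemma pow_bound:
  fixes x :: real
  assumes x0: "0 \<le> x" and x1: "x \<le> 1/2" and k: "1 \<le> k"
  shows "x^k * real k \<le> 2 * x"
proof -
  obtain j where kj: "k = Suc j" using k by (cases k) auto
  have "x^j \<le> (1/2)^j" using x1 x0 by (rule power_mono)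
  then have "x^k \<le> x * (1/2)^j" unfolding kj using x0 by (simp add: mult_left_mono)
  then have "x^k * real k \<le> (x * (1/2)^j) * real k" by (rule mult_right_mono) simp
  also have "\<dots> = x * ((1/2)^j * real k)" by simp
  also have "(1/2)^j * real k \<le> 2"
  proof -
    have "real k < 2^k" by (rule of_nat_less_two_power)
    then have "real k < 2 * 2^j" unfolding kj by simp
    then show ?thesis by (simp add: field_simps)
  qed
  then have "x * ((1/2)^j * real k) \<le> x * 2" using x0 by (rule mult_left_mono)
  finally show ?thesis by simp
qed

lemma flake_thick:
  fixes \<tau> :: "'a::euclidean_space set"
  assumes "flake \<Gamma>0 \<tau>"
  shows "thickness \<tau> < \<Gamma>0 ^ sdim \<tau>"
proof -
  have ng: "\<not> good \<Gamma>0 \<tau>" and pg: "\<And>\<sigma>. \<sigma> \<subset> \<tau> \<Longrightarrow> \<sigma> \<noteq> {} \<Longrightarrow> good \<Gamma>0 \<sigma>"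
    using assms unfolding flake_def by auto
  obtain \<sigma> where s: "\<sigma> \<subseteq> \<tau>" "\<sigma> \<noteq> {}" "\<not> thickness \<sigma> \<ge> \<Gamma>0 ^ sdim \<sigma>"
    using ng unfolding good_def by blast
  have "\<sigma> = \<tau>"
  proof (rule ccontr)
    assume "\<sigma> \<noteq> \<tau>"
    then have "\<sigma> \<subset> \<tau>" using s(1) by blast
    then have "good \<Gamma>0 \<sigma>" using s(2) by (rule pg)
    then have "thickness \<sigma> \<ge> \<Gamma>0 ^ sdim \<sigma>" unfolding good_def using s(2) by blast
    then show False using s(3) by simp
  qed
  then show ?thesis using s(3) by simp
qed

lemma good_thick:
  fixes \<sigma> :: "'a::euclidean_space set"
  assumes "good \<Gamma>0 \<sigma>" "\<sigma> \<noteq> {}"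
  shows "thickness \<sigma> \<ge> \<Gamma>0 ^ sdim \<sigma>"
  using assms unfolding good_def by blast

lemma thick_alt:
  fixes \<tau> :: "'a::euclidean_space set"
  assumes "finite \<tau>" "sdim \<tau> \<noteq> 0" "\<tau> \<noteq> {}"
  obtains q where "q \<in> \<tau>" "thickness \<tau> = altitude q \<tau> / (real (sdim \<tau>) * Lmax \<tau>)"
    "\<And>x. x \<in> \<tau> \<Longrightarrow> altitude q \<tau> \<le> altitude x \<tau>"
proof -
  have fi: "finite ((\<lambda>p. altitude p \<tau>) ` \<tau>)" using assms(1) by simp
  have ne: "(\<lambda>p. altitude p \<tau>) ` \<tau> \<noteq> {}" using assms(3) by simp
  have "Min ((\<lambda>p. altitude p \<tau>) ` \<tau>) \<in> (\<lambda>p. altitude p \<tau>) ` \<tau>" by (rule Min_in[OF fi ne])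
  then obtain q where q: "q \<in> \<tau>" "Min ((\<lambda>p. altitude p \<tau>) ` \<tau>) = altitude q \<tau>" by auto
  have le: "altitude q \<tau> \<le> altitude x \<tau>" if "x \<in> \<tau>" for x
    unfolding q(2)[symmetric] by (rule Min_le[OF fi]) (use that in simp)
  have "thickness \<tau> = altitude q \<tau> / (real (sdim \<tau>) * Lmax \<tau>)"
    unfolding thickness_def using assms(2) q(2) by simp
  then show ?thesis using q(1) le that by blast
qed

lemma card3:
  fixes \<tau> :: "'a::euclidean_space set"
  assumes fin: "finite \<tau>" and ne: "\<tau> \<noteq> {}" and fl: "flake \<Gamma>0 \<tau>" and G0: "0 < \<Gamma>0" "\<Gamma>0 \<le> 1"
  shows "card \<tau> \<ge> 3"
proof (rule ccontr)
  assume "\<not> card \<tau> \<ge> 3"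
  moreover have "card \<tau> \<noteq> 0" using fin ne by simp
  ultimately have disj: "card \<tau> = 1 \<or> card \<tau> = 2" by linarith
  have th: "thickness \<tau> < \<Gamma>0 ^ sdim \<tau>" using fl by (rule flake_thick)
  from disj show False
  proof
    assume "card \<tau> = 1"
    then have "sdim \<tau> = 0" unfolding sdim_def by simp
    then show False using th unfolding thickness_def by simp
  next
    assume c2: "card \<tau> = 2"
    then obtain x y where xy: "\<tau> = {x, y}" "x \<noteq> y" unfolding card_2_iff by blast
    have sd: "sdim \<tau> = 1" unfolding sdim_def using c2 by simp
    have ax: "altitude x \<tau> = dist x y" unfolding altitude_def xy(1) using xy(2) by (simp add: insert_Diff_if)
    have ay: "altitude y \<tau> = dist x y" unfolding altitude_def xy(1) using xy(2) by (simp add: insert_Diff_if dist_commute)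
    obtain q where q: "q \<in> \<tau>" "thickness \<tau> = altitude q \<tau> / (real (sdim \<tau>) * Lmax \<tau>)"
      using thick_alt[OF fin] sd ne by auto
    have aq: "altitude q \<tau> = dist x y" using q(1) ax ay xy(1) by auto
    obtain u v where uv: "u \<in> \<tau>" "v \<in> \<tau>" "u \<noteq> v" "Lmax \<tau> = dist u v"
      using Lmax_in[OF fin, of x y] xy by auto
    have L: "Lmax \<tau> = dist x y" using uv xy by (auto simp: dist_commute)
    have d0: "dist x y > 0" using xy(2) by simp
    have "thickness \<tau> = 1" using q(2) aq L sd d0 by simp
    then show False using th sd G0 by simp
  qed
qed



theorem mainTheorem9:
  fixes \<tau> :: "'a::euclidean_space set" and p C :: 'a
    and \<epsilon>' \<mu>' \<Gamma>0 R \<delta>0 :: real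
  assumes "\<epsilon>' > 0" and "0 < \<mu>'" and "\<mu>' \<le> 1" and "0 < \<Gamma>0" and "\<Gamma>0 \<le> 1"
    and "is_simplex \<tau>" and "flake \<Gamma>0 \<tau>"
    and "Lmax \<tau> \<le> 3 * \<epsilon>'" and "lmin \<tau> \<ge> \<mu>' * \<epsilon>'"
    and "p \<in> \<tau>"
    and "circumscribing C R (\<tau> - {p})" and "R < 3/2 * \<epsilon>'"
    and "\<delta>0 \<ge> 0"
    and "infdist p (frontier (ball C R)) \<le> \<delta>0 * lmin (\<tau> - {p})"
  shows "infdist p (circumsphere (\<tau> - {p}))
           \<le> (14 / \<mu>' * \<delta>0 + 216 / \<mu>' ^ 3 * \<Gamma>0) * circumradius (\<tau> - {p})"
proof -
  note eps = assms(1) and mu0 = assms(2) and mu1 = assms(3) and G0 = assms(4) and G1 = assms(5)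
    and fl = assms(7) and LM = assms(8) and lm = assms(9) and pt = assms(10) and cC = assms(11)
    and RR = assms(12) and d0 = assms(13) and dD = assms(14)
  have fin: "finite \<tau>" using assms(6) unfolding is_simplex_def by simp
  have ne: "\<tau> \<noteq> {}" using pt by blast
  have c3: "card \<tau> \<ge> 3" by (rule card3[OF fin ne fl G0 G1])
  define k where "k = sdim \<tau>"
  have k2: "k \<ge> 2" unfolding k_def sdim_def using c3 by simp
  define \<tau>p where "\<tau>p = \<tau> - {p}"
  have finp: "finite \<tau>p" unfolding \<tau>p_def using fin by simp
  have cardp: "card \<tau>p = card \<tau> - 1" unfolding \<tau>p_def using fin pt by (simp add: card_Diff_singleton)
  have sdp: "sdim \<tau>p = k - 1" unfolding sdim_def k_def cardp by simp
  have "card \<tau>p > 0" using cardp c3 by simp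
  then have "\<tau>p \<noteq> {}" by (intro notI) simp
  then obtain y0 where y0: "y0 \<in> \<tau>p" by (meson ex_in_conv)
  have "card (\<tau>p - {y0}) > 0" using cardp c3 y0 finp by (simp add: card_Diff_singleton)
  then have "\<tau>p - {y0} \<noteq> {}" by (intro notI) simp
  then obtain y1 where y1': "y1 \<in> \<tau>p - {y0}" by (meson ex_in_conv)
  have y1: "y1 \<in> \<tau>p" and ne01: "y0 \<noteq> y1" using y1' by auto
  have y0t: "y0 \<in> \<tau>" and py0: "p \<noteq> y0" using y0 unfolding \<tau>p_def by auto
  have subp: "\<tau>p \<subseteq> \<tau>" unfolding \<tau>p_def by blast
  define L where "L = Lmax \<tau>"
  have me: "\<mu>' * \<epsilon>' > 0" using mu0 eps by simp
  have lpos: "lmin \<tau> > 0" using lm me by linarith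
  have Ll: "lmin \<tau> \<le> L" unfolding L_def by (rule lmin_Lmax[OF fin pt y0t py0])
  have Lpos: "L > 0" using lpos Ll by linarith
  have k0: "sdim \<tau> \<noteq> 0" using k2 k_def by simp
  obtain q where q: "q \<in> \<tau>" and thq: "thickness \<tau> = altitude q \<tau> / (real (sdim \<tau>) * Lmax \<tau>)"
    using thick_alt[OF fin k0 ne] by blast
  have th: "thickness \<tau> < \<Gamma>0 ^ k" unfolding k_def using fl by (rule flake_thick)
  have kL: "real k * L > 0" using k2 Lpos by simp
  have aq: "altitude q \<tau> < \<Gamma>0 ^ k * (real k * L)"
    using th thq kL unfolding k_def[symmetric] L_def[symmetric] by (simp add: divide_less_eq)
  define h where "h = infdist p (affine hull \<tau>p)"
  have hp: "h = altitude p \<tau>" unfolding altitude_def h_def \<tau>p_def ..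
  have h0: "0 \<le> h" unfolding h_def by (rule infdist_nonneg)
  have y0F: "y0 \<in> affine hull \<tau>p" using y0 by (rule hull_inc)
  have "h \<le> dist p y0" unfolding h_def using y0F by (rule infdist_le)
  also have "dist p y0 \<le> L" unfolding L_def by (rule Lmax_ge[OF fin pt y0t py0])
  finally have hL: "h \<le> L" .
  have hb: "h \<le> 18 * \<Gamma>0 * \<epsilon>' / \<mu>'"
  proof -
    have target: "6 * \<Gamma>0 * \<epsilon>' \<le> 18 * \<Gamma>0 * \<epsilon>' / \<mu>'"
    proof -
      have "6 * \<Gamma>0 * \<epsilon>' \<le> 18 * \<Gamma>0 * \<epsilon>'" using G0 eps by simp
      also have "\<dots> \<le> 18 * \<Gamma>0 * \<epsilon>' / \<mu>'" using G0 eps mu0 mu1 by (simp add: field_simps)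
      finally show ?thesis .
    qed
    show ?thesis
    proof (cases "q = p")
      case True
      have hlt: "h < \<Gamma>0 ^ k * (real k * L)" using aq True hp by simp
      show ?thesis
      proof (cases "\<Gamma>0 \<le> 1/2")
        case True
        have "\<Gamma>0 ^ k * real k \<le> 2 * \<Gamma>0" using G0 True k2 by (intro pow_bound) simp_all
        then have "(\<Gamma>0 ^ k * real k) * L \<le> (2 * \<Gamma>0) * L" using Lpos
          by (intro mult_right_mono) simp_all
        then have "\<Gamma>0 ^ k * (real k * L) \<le> 2 * \<Gamma>0 * L" by (simp add: mult.assoc)
        also have "\<dots> \<le> 2 * \<Gamma>0 * (3 * \<epsilon>')" using LM G0 unfolding L_def by simp
        finally show ?thesis using hlt target by simp
      next
        case False
        have "h \<le> 3 * \<epsilon>'" using hL LM unfolding L_def by simp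
        also have "\<dots> \<le> 6 * \<Gamma>0 * \<epsilon>'" using False eps by simp
        finally show ?thesis using target by simp
      qed
    next
      case False
      define T' where "T' = \<tau> - {p} - {q}"
      have qtp: "q \<in> \<tau>p" unfolding \<tau>p_def using q False by simp
      have "card T' = card \<tau> - 2" unfolding T'_def using fin pt q False
        by (simp add: card_Diff_singleton)
      then have "card T' > 0" using c3 by simp
      then have "T' \<noteq> {}" by (intro notI) simp
      then obtain a0 where a0: "a0 \<in> T'" by (meson ex_in_conv)
      have e1: "\<tau> - {p} = insert q T'" unfolding T'_def using q False by blast
      have e2: "\<tau> - {q} = insert p T'" unfolding T'_def using pt False by blast
      have e4: "insert q T' - {q} = T'" unfolding T'_def by blast
      have gk: "h * altitude q \<tau>p \<le> altitude q \<tau> * dist p a0"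
        using gram_key[OF a0, of p q] unfolding h_def altitude_def \<tau>p_def e1 e2 e4 .
      have a0t: "a0 \<in> \<tau>" and pa0: "p \<noteq> a0" using a0 unfolding T'_def by auto
      have da: "dist p a0 \<le> L" unfolding L_def by (rule Lmax_ge[OF fin pt a0t pa0])
      have aq0: "0 \<le> altitude q \<tau>" unfolding altitude_def by (rule infdist_nonneg)
      have "\<tau>p \<subset> \<tau>" using pt unfolding \<tau>p_def by blast
      moreover have "\<tau>p \<noteq> {}" using y0 by blast
      ultimately have gp: "good \<Gamma>0 \<tau>p" using fl unfolding flake_def by blast
      have thp: "thickness \<tau>p \<ge> \<Gamma>0 ^ (k - 1)" using good_thick[OF gp \<open>\<tau>p \<noteq> {}\<close>] sdp by simp
      have sdp0: "sdim \<tau>p \<noteq> 0" using sdp k2 by simp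
      obtain q' where q': "q' \<in> \<tau>p" and thq': "thickness \<tau>p = altitude q' \<tau>p / (real (sdim \<tau>p) * Lmax \<tau>p)"
        and mq': "\<And>x. x \<in> \<tau>p \<Longrightarrow> altitude q' \<tau>p \<le> altitude x \<tau>p"
        using thick_alt[OF finp sdp0 \<open>\<tau>p \<noteq> {}\<close>] by blast
      define Lp where "Lp = Lmax \<tau>p"
      have lmp: "lmin \<tau> \<le> lmin \<tau>p" by (rule lmin_mono[OF fin subp y0 y1 ne01])
      have lLp: "lmin \<tau>p \<le> Lp" unfolding Lp_def by (rule lmin_Lmax[OF finp y0 y1 ne01])
      have Lpb: "\<mu>' * \<epsilon>' \<le> Lp" using lm lmp lLp by linarith
      have Lp0: "Lp > 0" using Lpb me by linarith
      define g where "g = \<Gamma>0 ^ (k - 1)"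
      have g0: "g > 0" unfolding g_def using G0 by simp
      obtain j where kj: "k = Suc j" using k2 by (cases k) auto
      have gk': "\<Gamma>0 ^ k = \<Gamma>0 * g" unfolding g_def kj by simp
      have km: "real (k - 1) = real k - 1" using k2 by simp
      have km0: "real k - 1 > 0" using k2 by simp
      have den: "real (sdim \<tau>p) * Lp > 0" using sdp km km0 Lp0 by simp
      have "g \<le> altitude q' \<tau>p / (real (sdim \<tau>p) * Lp)" using thp thq' unfolding g_def Lp_def by simp
      then have "g * (real (sdim \<tau>p) * Lp) \<le> altitude q' \<tau>p" using den by (simp add: le_divide_eq)
      also have "\<dots> \<le> altitude q \<tau>p" by (rule mq'[OF qtp])
      finally have aqp: "g * ((real k - 1) * Lp) \<le> altitude q \<tau>p" using sdp km by simp
      have "h * (g * ((real k - 1) * Lp)) \<le> h * altitude q \<tau>p" using aqp h0 by (rule mult_left_mono)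
      also have "\<dots> \<le> altitude q \<tau> * dist p a0" by (rule gk)
      also have "\<dots> \<le> altitude q \<tau> * L" using da aq0 by (rule mult_left_mono)
      also have "\<dots> \<le> (\<Gamma>0 ^ k * (real k * L)) * L" using aq Lpos by (intro mult_right_mono) simp_all
      finally have "g * (h * (real k - 1) * Lp) \<le> g * (\<Gamma>0 * real k * L * L)" unfolding gk'
        by (simp add: algebra_simps)
      then have s1: "h * (real k - 1) * Lp \<le> \<Gamma>0 * real k * L * L" using g0 by simp
      have "\<Gamma>0 * real k * L * L \<le> \<Gamma>0 * (2 * (real k - 1)) * L * L" using k2 G0 Lpos
        by (intro mult_right_mono mult_left_mono) simp_all
      then have "(real k - 1) * (h * Lp) \<le> (real k - 1) * (2 * \<Gamma>0 * L * L)" using s1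
        by (simp add: algebra_simps)
      then have s2: "h * Lp \<le> 2 * \<Gamma>0 * L * L" using km0 by simp
      have "L * L \<le> (3 * \<epsilon>') * (3 * \<epsilon>')" using LM Lpos unfolding L_def[symmetric]
        by (intro mult_mono) simp_all
      then have "2 * \<Gamma>0 * (L * L) \<le> 2 * \<Gamma>0 * ((3 * \<epsilon>') * (3 * \<epsilon>'))" using G0 by simp
      then have s3: "h * Lp \<le> 18 * \<Gamma>0 * \<epsilon>' * \<epsilon>'" using s2 by (simp add: algebra_simps)
      have "h * (\<mu>' * \<epsilon>') \<le> h * Lp" using Lpb h0 by (rule mult_left_mono)
      then have "h * \<mu>' * \<epsilon>' \<le> (18 * \<Gamma>0 * \<epsilon>' / \<mu>') * \<mu>' * \<epsilon>'" using s3 mu0 by (simp add: algebra_simps)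
      then have "h * \<mu>' \<le> 18 * \<Gamma>0 * \<epsilon>'" using mu0 eps by simp
      then show ?thesis using mu0 by (simp add: le_divide_eq)
    qed
  qed
  have cCp: "circumscribing C R \<tau>p" using cC unfolding \<tau>p_def .
  define r0 where "r0 = circumradius \<tau>p"
  define c0 where "c0 = circumcentre \<tau>p"
  have cc0: "circumscribing c0 r0 \<tau>p" unfolding c0_def r0_def by (rule circ_facts(1)[OF y0 y1 ne01 cCp])
  have "lmin \<tau>p \<le> dist y0 y1" by (rule lmin_le[OF finp y0 y1 ne01])
  also have "dist y0 y1 \<le> dist y0 c0 + dist c0 y1" by (rule dist_triangle)
  also have "\<dots> = 2 * r0" using circ_dist[OF cc0 y0] circ_dist[OF cc0 y1] by (simp add: dist_commute)
  finally have lp2: "lmin \<tau>p \<le> 2 * r0" .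
  have lmp: "lmin \<tau> \<le> lmin \<tau>p" by (rule lmin_mono[OF fin subp y0 y1 ne01])
  have er: "\<mu>' * \<epsilon>' \<le> 2 * r0" using lm lmp lp2 by linarith
  have r0p: "r0 > 0" using cc0 by (rule circ_pos)
  have epsr: "\<epsilon>' \<le> 2 * r0 / \<mu>'" using er mu0 by (simp add: field_simps)
  have Rb: "R \<le> 3 / \<mu>' * circumradius \<tau>p"
  proof -
    have "3/2 * \<epsilon>' \<le> 3/2 * (2 * r0 / \<mu>')" using epsr by simp
    also have "\<dots> = 3 / \<mu>' * r0" by simp
    finally show ?thesis using RR unfolding r0_def by simp
  qed
  have Hb: "infdist p (affine hull \<tau>p) \<le> 18 * \<Gamma>0 * \<epsilon>' / \<mu>'" using hb unfolding h_def .
  have Db: "infdist p (frontier (ball C R)) \<le> \<delta>0 * lmin \<tau>p" using dD unfolding \<tau>p_def .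
  have SB: "infdist p (circumsphere \<tau>p) \<le> 6/\<mu>' * (\<delta>0 * lmin \<tau>p) + 6/\<mu>' * (18 * \<Gamma>0 * \<epsilon>' / \<mu>')"
    by (rule sphere_bound[OF y0 y1 ne01 cCp mu0 mu1 Rb Hb Db])
  have t1: "6/\<mu>' * (\<delta>0 * lmin \<tau>p) \<le> 14 / \<mu>' * \<delta>0 * r0"
  proof -
    have dl: "\<delta>0 * lmin \<tau>p \<le> \<delta>0 * (2 * r0)" using lp2 d0 by (rule mult_left_mono)
    have "6/\<mu>' * (\<delta>0 * lmin \<tau>p) \<le> 6/\<mu>' * (\<delta>0 * (2 * r0))"
      by (rule mult_left_mono[OF dl]) (use mu0 in simp)
    also have "\<dots> = 12 / \<mu>' * \<delta>0 * r0" by simp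
    also have "\<dots> \<le> 14 / \<mu>' * \<delta>0 * r0" using mu0 d0 r0p by (intro mult_right_mono) (simp_all add: divide_right_mono)
    finally show ?thesis .
  qed
  have t2: "6/\<mu>' * (18 * \<Gamma>0 * \<epsilon>' / \<mu>') \<le> 216 / \<mu>' ^ 3 * \<Gamma>0 * r0"
  proof -
    have "6/\<mu>' * (18 * \<Gamma>0 * \<epsilon>' / \<mu>') = 108 * \<Gamma>0 / \<mu>'^2 * \<epsilon>'" by (simp add: power2_eq_square)
    also have "\<dots> \<le> 108 * \<Gamma>0 / \<mu>'^2 * (2 * r0 / \<mu>')" using epsr G0 mu0 by (intro mult_left_mono) simp_all
    also have "\<dots> = 216 / \<mu>' ^ 3 * \<Gamma>0 * r0" by (simp add: power3_eq_cube power2_eq_square)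
    finally show ?thesis .
  qed
  have "infdist p (circumsphere \<tau>p) \<le> (14 / \<mu>' * \<delta>0 + 216 / \<mu>' ^ 3 * \<Gamma>0) * r0"
    using SB t1 t2 by (simp add: algebra_simps)
  then show ?thesis unfolding r0_def \<tau>p_def .
qed

end
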